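(* Let $G$ be a connected graph cellularly embedded on an orientable closed surface of genus $h\geq 0$. If $G$ has an even number of edges and has a perfect matching, then the total resonance graph $R_t(G)$ is bipartite.
   Context: A perfect matching of $G$ is a set of edges covering every vertex exactly once. A face of the embedding whose boundary is a cycle is said to have a facial cycle. The total resonance graph $R_t(G)$ has as vertices the perfect matchings of $G$, and two perfect matchings $M_1,M_2$ are adjacent if and only if the symmetric difference $M_1\oplus M_2=(M_1\setminus M_2)\cup(M_2\setminus M_1)$ is exactly the edge set of one facial cycle of $G$ (i.e. $M_2$ is obtained from $M_1$ by rotating along an $M_1$-alternating facial cycle). *)

theory Defs
  imports "HOL-Combinatorics.Permutations"
begin

text \<open>A graph cellularly embedded on an orientable closed surface is represented
  combinatorially by a rotation system (oriented combinatorial map):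
  a finite set of darts D (half-edges), a fixed-point-free involution alpha on D
  (pairing the two darts of each edge) and a permutation sigma of D (the cyclic
  order of darts around each vertex, given by the orientation).  Loops and multiple edges are allowed.\<close>

definition orb :: "('d \<Rightarrow> 'd) \<Rightarrow> 'd \<Rightarrow> 'd set" where
  "orb f d = {(f ^^ n) d | n. True}"

definition rotation_system :: "'d set \<Rightarrow> ('d \<Rightarrow> 'd) \<Rightarrow> ('d \<Rightarrow> 'd) \<Rightarrow> bool" where
  "rotation_system D \<alpha> \<sigma> \<longleftrightarrow> finite D \<and> \<alpha> permutes D \<and> \<sigma> permutes D \<and>
     (\<forall>d\<in>D. \<alpha> d \<noteq> d \<and> \<alpha> (\<alpha> d) = d)"

definition rs_vertices :: "'d set \<Rightarrow> ('d \<Rightarrow> 'd) \<Rightarrow> 'd set set" where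
  "rs_vertices D \<sigma> = {orb \<sigma> d | d. d \<in> D}"

definition rs_edge :: "('d \<Rightarrow> 'd) \<Rightarrow> 'd \<Rightarrow> 'd set" where
  "rs_edge \<alpha> d = {d, \<alpha> d}"

definition rs_edges :: "'d set \<Rightarrow> ('d \<Rightarrow> 'd) \<Rightarrow> 'd set set" where
  "rs_edges D \<alpha> = {rs_edge \<alpha> d | d. d \<in> D}"

definition rs_faces :: "'d set \<Rightarrow> ('d \<Rightarrow> 'd) \<Rightarrow> ('d \<Rightarrow> 'd) \<Rightarrow> 'd set set" where
  "rs_faces D \<alpha> \<sigma> = {orb (\<sigma> \<circ> \<alpha>) d | d. d \<in> D}"

definition rs_connected :: "'d set \<Rightarrow> ('d \<Rightarrow> 'd) \<Rightarrow> ('d \<Rightarrow> 'd) \<Rightarrow> bool" where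
  "rs_connected D \<alpha> \<sigma> \<longleftrightarrow>
     (\<forall>d\<in>D. \<forall>e\<in>D. (d, e) \<in> ({(x, \<sigma> x) | x. x \<in> D} \<union> {(x, \<alpha> x) | x. x \<in> D})\<^sup>*)"

text \<open>Perfect matching: a set of edges such that every vertex is covered by
  exactly one of them (counted by darts, so a loop would cover its vertex twice
  and is therefore excluded).\<close>
definition perfect_matching :: "'d set \<Rightarrow> ('d \<Rightarrow> 'd) \<Rightarrow> ('d \<Rightarrow> 'd) \<Rightarrow> 'd set set \<Rightarrow> bool" where
  "perfect_matching D \<alpha> \<sigma> M \<longleftrightarrow> M \<subseteq> rs_edges D \<alpha> \<and>
     (\<forall>v\<in>rs_vertices D \<sigma>. card (v \<inter> \<Union>M) = 1)"

text \<open>The boundary walk of the face F traverses the darts of F (each dart d is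
  the edge rs_edge alpha d leaving the vertex orb sigma d).  The face is a facial
  cycle iff this closed walk repeats neither vertices nor edges.\<close>
definition facial_cycle :: "'d set \<Rightarrow> ('d \<Rightarrow> 'd) \<Rightarrow> ('d \<Rightarrow> 'd) \<Rightarrow> 'd set \<Rightarrow> bool" where
  "facial_cycle D \<alpha> \<sigma> F \<longleftrightarrow> F \<in> rs_faces D \<alpha> \<sigma> \<and>
     inj_on (orb \<sigma>) F \<and> inj_on (rs_edge \<alpha>) F"

definition face_edges :: "('d \<Rightarrow> 'd) \<Rightarrow> 'd set \<Rightarrow> 'd set set" where
  "face_edges \<alpha> F = rs_edge \<alpha> ` F"

definition sym_diff :: "'a set \<Rightarrow> 'a set \<Rightarrow> 'a set" where
  "sym_diff A B = (A - B) \<union> (B - A)"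

definition total_res_adj :: "'d set \<Rightarrow> ('d \<Rightarrow> 'd) \<Rightarrow> ('d \<Rightarrow> 'd) \<Rightarrow> 'd set set \<Rightarrow> 'd set set \<Rightarrow> bool" where
  "total_res_adj D \<alpha> \<sigma> M1 M2 \<longleftrightarrow>
     perfect_matching D \<alpha> \<sigma> M1 \<and> perfect_matching D \<alpha> \<sigma> M2 \<and>
     (\<exists>F. facial_cycle D \<alpha> \<sigma> F \<and> sym_diff M1 M2 = face_edges \<alpha> F)"

definition bipartite :: "'v set \<Rightarrow> ('v \<Rightarrow> 'v \<Rightarrow> bool) \<Rightarrow> bool" where
  "bipartite V adj \<longleftrightarrow> (\<exists>X. \<forall>u\<in>V. \<forall>w\<in>V. adj u w \<longrightarrow> (u \<in> X \<longleftrightarrow> w \<notin> X))"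

definition total_resonance_bipartite :: "'d set \<Rightarrow> ('d \<Rightarrow> 'd) \<Rightarrow> ('d \<Rightarrow> 'd) \<Rightarrow> bool" where
  "total_resonance_bipartite D \<alpha> \<sigma> \<longleftrightarrow>
     bipartite {M. perfect_matching D \<alpha> \<sigma> M} (total_res_adj D \<alpha> \<sigma>)"

text \<open>Genus of the orientable surface of the cellular embedding, via Euler's formula
  V - E + F = 2 - 2h.\<close>
definition rs_genus :: "'d set \<Rightarrow> ('d \<Rightarrow> 'd) \<Rightarrow> ('d \<Rightarrow> 'd) \<Rightarrow> int" where
  "rs_genus D \<alpha> \<sigma> = (2 - (int (card (rs_vertices D \<sigma>)) - int (card (rs_edges D \<alpha>))
                          + int (card (rs_faces D \<alpha> \<sigma>)))) div 2"

end

theory Submission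
  imports Defs "HOL-Combinatorics.Cycles"
begin

lemma orb_self: "x \<in> orb p x"
  unfolding orb_def by (auto intro: exI[of _ 0])

lemma orb_step: "p x \<in> orb p x"
  unfolding orb_def by (auto intro!: exI[of _ 1])

lemma orb_funpow: "(p ^^ n) x \<in> orb p x"
  unfolding orb_def by auto

lemma orb_subset:
  assumes "p permutes D" "x \<in> D" shows "orb p x \<subseteq> D"
  using assms unfolding orb_def
  by (auto intro: permutes_in_image[OF permutes_funpow[OF assms(1)], THEN iffD2])

lemma orb_in_orb_sub:
  assumes "y \<in> orb p x" shows "orb p y \<subseteq> orb p x"
proof -
  from assms obtain k where k: "y = (p ^^ k) x" unfolding orb_def by auto
  show ?thesis
  proof
    fix z assume "z \<in> orb p y"
    then obtain n where "z = (p ^^ n) y" unfolding orb_def by auto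
    hence "z = (p ^^ (n + k)) x" by (simp add: k funpow_add)
    thus "z \<in> orb p x" using orb_funpow by metis
  qed
qed

lemma orb_sym:
  assumes "permutation p" "y \<in> orb p x" shows "x \<in> orb p y"
proof -
  from assms obtain k where k: "y = (p ^^ k) x" unfolding orb_def by auto
  obtain n where n: "p ^^ n = id" "n > k" using permutation_is_nilpotent'[OF assms(1)] by blast
  have "(p ^^ (n - k)) y = (p ^^ ((n-k) + k)) x" by (simp add: k funpow_add)
  also have "(n-k)+k = n" using n by simp
  finally have "(p ^^ (n - k)) y = x" using n by simp
  thus ?thesis using orb_funpow by metis
qed

lemma orb_eq:
  assumes "permutation p" "y \<in> orb p x" shows "orb p y = orb p x"
  using orb_in_orb_sub orb_sym assms by (metis subset_antisym)

lemma orb_eq_on: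
  assumes "\<forall>y\<in>A. f y = g y" "\<forall>y\<in>A. g y \<in> A" "x \<in> A"
  shows "orb f x = orb g x"
proof -
  have "(f ^^ n) x = (g ^^ n) x \<and> (g ^^ n) x \<in> A" for n
    by (induction n) (use assms in auto)
  thus ?thesis unfolding orb_def by auto
qed

lemma orbs_disjoint:
  assumes "permutation p" "orb p x \<noteq> orb p y" shows "orb p x \<inter> orb p y = {}"
  using orb_eq[OF assms(1)] assms(2) by blast

lemma orbs_pairwise:
  assumes "permutation p" shows "pairwise disjnt {orb p d | d. d \<in> D}"
  unfolding pairwise_def disjnt_def using orbs_disjoint[OF assms] by blast

lemma evenperm_cycle:
  "distinct (x # cs) \<Longrightarrow> evenperm (cycle_of_list (x # cs)) \<longleftrightarrow> even (length cs)"
proof (induction cs arbitrary: x)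
  case Nil then show ?case by simp
next
  case (Cons y cs)
  have e: "cycle_of_list (x # y # cs) = Transposition.transpose x y \<circ> cycle_of_list (y # cs)" by simp
  have "evenperm (Transposition.transpose x y \<circ> cycle_of_list (y # cs)) = (evenperm (Transposition.transpose x y) = evenperm (cycle_of_list (y # cs)))"
    by (rule evenperm_comp) (simp_all add: permutation_swap_id permutation_of_cycle)
  moreover have "evenperm (cycle_of_list (y # cs)) = even (length cs)" using Cons by simp
  moreover have "x \<noteq> y" using Cons by simp
  ultimately show ?case by (simp only: e evenperm_swap length_Cons even_Suc) simp
qed

lemma orb_cycle:
  assumes "distinct cs" "x \<in> set cs" shows "orb (cycle_of_list cs) x = set cs"
proof -
  obtain i where i: "i < length cs" "x = cs ! i" using assms(2) by (metis in_set_conv_nth)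
  have rot: "((cycle_of_list cs) ^^ n) (cs ! i) = cs ! ((i + n) mod length cs)" for n
  proof -
    have "((cycle_of_list cs) ^^ n) (cs ! i) = map ((cycle_of_list cs) ^^ n) cs ! i" using i by simp
    also have "\<dots> = rotate n cs ! i" using cyclic_rotation[OF assms(1)] by simp
    also have "\<dots> = cs ! ((i + n) mod length cs)" using i by (simp add: nth_rotate add.commute)
    finally show ?thesis .
  qed
  show ?thesis
  proof
    show "orb (cycle_of_list cs) x \<subseteq> set cs" unfolding orb_def i(2) rot using i by (auto intro!: nth_mem mod_less_divisor)
    show "set cs \<subseteq> orb (cycle_of_list cs) x"
    proof
      fix z assume "z \<in> set cs"
      then obtain j where j: "j < length cs" "z = cs ! j" by (metis in_set_conv_nth)
      have "(i + (j + length cs - i)) mod length cs = j" using i j by simp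
      thus "z \<in> orb (cycle_of_list cs) x" unfolding i(2) using j rot orb_funpow by metis
    qed
  qed
qed

lemma cycle_decomp_parity:
  assumes "cycle_decomp I p" "finite I"
  shows "p permutes I \<and> (evenperm p \<longleftrightarrow> even (card I + card {orb p d | d. d \<in> I}))"
  using assms
proof (induction rule: cycle_decomp.induct)
  case empty
  then show ?case by (simp add: permutes_id id_def[symmetric])
next
  case (comp I p cs)
  let ?c = "cycle_of_list cs"
  have finI: "finite I" using comp by simp
  have pI: "p permutes I" and par: "evenperm p \<longleftrightarrow> even (card I + card {orb p d | d. d \<in> I})"
    using comp finI by auto
  have cP: "?c permutes set cs" by (rule cycle_permutes)
  have perm: "(?c \<circ> p) permutes (set cs \<union> I)"
    by (rule permutes_compose) (use permutes_subset[OF pI] permutes_subset[OF cP] in auto)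
  have q_I: "(?c \<circ> p) y = p y" if "y \<in> I" for y
  proof -
    have "p y \<in> I" using pI that by (simp add: permutes_in_image)
    hence "p y \<notin> set cs" using comp by auto
    thus ?thesis by (simp add: id_outside_supp)
  qed
  have q_cs: "(?c \<circ> p) y = ?c y" if "y \<in> set cs" for y
  proof -
    have "y \<notin> I" using comp that by auto
    thus ?thesis using pI by (simp add: permutes_not_in)
  qed
  have o1: "orb (?c \<circ> p) y = orb p y" if "y \<in> I" for y
    by (rule orb_eq_on[where A=I]) (use q_I pI that in \<open>auto simp: permutes_in_image\<close>)
  have o2: "orb (?c \<circ> p) y = set cs" if "y \<in> set cs" for y
  proof -
    have "orb (?c \<circ> p) y = orb ?c y"
      by (rule orb_eq_on[where A="set cs"]) (use q_cs cP that in \<open>auto simp: permutes_in_image\<close>)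
    thus ?thesis using orb_cycle comp that by simp
  qed
  have orbs: "{orb (?c \<circ> p) d | d. d \<in> set cs \<union> I} =
     {orb (?c \<circ> p) d | d. d \<in> set cs} \<union> {orb p d | d. d \<in> I}"
    using o1 by blast
  have evc: "evenperm (?c \<circ> p) = (evenperm ?c = evenperm p)"
    by (rule evenperm_comp) (use permutation_of_cycle pI finI permutation_permutes in blast)+
  show ?case
  proof (cases cs)
    case Nil
    then show ?thesis using perm par by simp
  next
    case (Cons x xs)
    have A: "{orb (?c \<circ> p) d | d. d \<in> set cs} = {set cs}" using o2 Cons by auto
    have notin: "set cs \<notin> {orb p d | d. d \<in> I}"
    proof
      assume "set cs \<in> {orb p d | d. d \<in> I}"
      then obtain d where "d \<in> I" "set cs = orb p d" by auto
      thus False using orb_self[of d p] comp by auto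
    qed
    have fin: "finite {orb p d | d. d \<in> I}" using finI by simp
    have cardO: "card {orb (?c \<circ> p) d | d. d \<in> set cs \<union> I} = Suc (card {orb p d | d. d \<in> I})"
      unfolding orbs A using notin fin by simp
    have cardI: "card (set cs \<union> I) = length cs + card I"
      using comp finI by (simp add: card_Un_disjoint distinct_card)
    have ec: "evenperm ?c = even (length xs)" using evenperm_cycle comp Cons by simp
    have X: "evenperm (?c \<circ> p) \<longleftrightarrow> even (card (set cs \<union> I) + card {orb (?c \<circ> p) d | d. d \<in> set cs \<union> I})"
      unfolding cardO cardI evc ec using par Cons by (simp, argo)
    show ?thesis using perm X by blast
  qed
qed

lemma perm_parity:
  assumes "p permutes D" "finite D"
  shows "evenperm p \<longleftrightarrow> even (card D + card {orb p d | d. d \<in> D})"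
  using cycle_decomp_parity[OF cycle_decomposition[OF assms] assms(2)] by simp

lemma sym_diff_mem: "x \<in> sym_diff A B \<longleftrightarrow> \<not> (x \<in> A \<longleftrightarrow> x \<in> B)"
  unfolding sym_diff_def by auto

lemma sym_diff_comm: "sym_diff A B = sym_diff B A"
  unfolding sym_diff_def by auto

lemma sym_diff_trans: "sym_diff (sym_diff A B) (sym_diff B C) = sym_diff A C"
  unfolding sym_diff_def by auto

lemma sym_diff_self: "sym_diff A A = {}"
  unfolding sym_diff_def by auto

lemma card_sym_diff_parity:
  assumes "finite A" "finite B"
  shows "even (card (sym_diff A B)) \<longleftrightarrow> (even (card A) \<longleftrightarrow> even (card B))"
proof -
  have "card (sym_diff A B) = card (A - B) + card (B - A)"
    unfolding sym_diff_def by (rule card_Un_disjoint) (use assms in auto)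
  moreover have "card (A - B) = card A - card (A \<inter> B)" using assms by (simp add: card_Diff_subset_Int)
  moreover have "card (B - A) = card B - card (A \<inter> B)" using assms
    by (metis card_Diff_subset_Int finite_Int inf_commute)
  moreover have "card (A \<inter> B) \<le> card A" "card (A \<inter> B) \<le> card B" using assms by (auto intro: card_mono)
  ultimately show ?thesis by presburger
qed

locale rsys =
  fixes D :: "'d set" and \<alpha> \<sigma> :: "'d \<Rightarrow> 'd"
  assumes rs: "rotation_system D \<alpha> \<sigma>"
begin

lemma finD: "finite D" and aperm: "\<alpha> permutes D" and sperm: "\<sigma> permutes D"
  and anfix: "d \<in> D \<Longrightarrow> \<alpha> d \<noteq> d" and ainv: "d \<in> D \<Longrightarrow> \<alpha> (\<alpha> d) = d"
  using rs unfolding rotation_system_def by auto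

lemma anfix': "d \<in> D \<Longrightarrow> d \<noteq> \<alpha> d" using anfix by metis

lemma aD: "d \<in> D \<Longrightarrow> \<alpha> d \<in> D" using aperm by (simp add: permutes_in_image)
lemma sD: "d \<in> D \<Longrightarrow> \<sigma> d \<in> D" using sperm by (simp add: permutes_in_image)

lemma pperm: "(\<sigma> \<circ> \<alpha>) permutes D" by (rule permutes_compose[OF aperm sperm])

lemma permutation_a: "permutation \<alpha>" using aperm finD permutation_permutes by blast
lemma permutation_s: "permutation \<sigma>" using sperm finD permutation_permutes by blast
lemma permutation_p: "permutation (\<sigma> \<circ> \<alpha>)" using pperm finD permutation_permutes by blast

lemma orb_a: assumes "d \<in> D" shows "orb \<alpha> d = rs_edge \<alpha> d"
proof -
  have itr: "(\<alpha> ^^ n) d = (if even n then d else \<alpha> d)" for n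
    by (induction n) (use ainv assms in auto)
  hence "orb \<alpha> d = {d, \<alpha> d}" unfolding orb_def
  proof (intro equalityI subsetI)
    fix x assume "x \<in> {(\<alpha> ^^ n) d |n. True}"
    then obtain n where "x = (\<alpha> ^^ n) d" by blast
    thus "x \<in> {d, \<alpha> d}" using itr[of n] by (cases "even n") auto
  next
    fix x assume "x \<in> {d, \<alpha> d}"
    hence "x = (\<alpha> ^^ 0) d \<or> x = (\<alpha> ^^ 1) d" by auto
    thus "x \<in> {(\<alpha> ^^ n) d |n. True}" by blast
  qed
  thus ?thesis unfolding rs_edge_def .
qed

lemma edges_orbs: "rs_edges D \<alpha> = {orb \<alpha> d | d. d \<in> D}"
  unfolding rs_edges_def using orb_a by (metis (no_types, lifting))

lemma card_edge: "d \<in> D \<Longrightarrow> card (rs_edge \<alpha> d) = 2"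
  unfolding rs_edge_def using anfix'[of d] by simp

lemma card_edges2: "e \<in> rs_edges D \<alpha> \<Longrightarrow> card e = 2"
  unfolding rs_edges_def using card_edge by blast

lemma edge_sub: "e \<in> rs_edges D \<alpha> \<Longrightarrow> e \<subseteq> D"
  unfolding rs_edges_def rs_edge_def using aD by blast

lemma card_D: "card D = 2 * card (rs_edges D \<alpha>)"
proof -
  have U: "\<Union>(rs_edges D \<alpha>) = D"
  proof
    show "\<Union>(rs_edges D \<alpha>) \<subseteq> D" unfolding rs_edges_def rs_edge_def using aD by blast
    show "D \<subseteq> \<Union>(rs_edges D \<alpha>)" unfolding rs_edges_def rs_edge_def by blast
  qed
  have pw: "pairwise disjnt (rs_edges D \<alpha>)"
    unfolding edges_orbs by (rule orbs_pairwise[OF permutation_a])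
  have fin: "finite (rs_edges D \<alpha>)" unfolding rs_edges_def using finD by simp
  have "card D = sum card (rs_edges D \<alpha>)"
  proof -
    have "\<And>A. A \<in> rs_edges D \<alpha> \<Longrightarrow> finite A" unfolding rs_edges_def rs_edge_def by auto
    thus ?thesis using card_Union_disjoint[OF pw] U by metis
  qed
  also have "\<dots> = sum (\<lambda>_. 2) (rs_edges D \<alpha>)"
    by (rule sum.cong) (simp_all add: card_edges2)
  finally show ?thesis by simp
qed

lemma card_V_even:
  assumes "perfect_matching D \<alpha> \<sigma> M" shows "even (card (rs_vertices D \<sigma>))"
proof -
  let ?U = "\<Union>M"
  have Msub: "M \<subseteq> rs_edges D \<alpha>" and one: "\<forall>v\<in>rs_vertices D \<sigma>. card (v \<inter> ?U) = 1"
    using assms unfolding perfect_matching_def by auto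
  have UD: "?U \<subseteq> D" using Msub edge_sub by blast
  have finE: "finite (rs_edges D \<alpha>)" unfolding rs_edges_def using finD by simp
  have pwE: "pairwise disjnt (rs_edges D \<alpha>)"
    unfolding edges_orbs by (rule orbs_pairwise[OF permutation_a])
  have "card ?U = sum card M"
    apply (rule card_Union_disjoint)
    using pairwise_subset[OF pwE Msub] apply simp
    using UD finD by (meson Sup_upper rev_finite_subset subset_trans)
  also have "\<dots> = sum (\<lambda>_. 2) M"
    by (rule sum.cong) (use Msub card_edges2 in auto)
  finally have cU: "card ?U = 2 * card M" by simp
  have finV: "finite (rs_vertices D \<sigma>)" unfolding rs_vertices_def using finD by simp
  have UV: "?U = (\<Union>v\<in>rs_vertices D \<sigma>. v \<inter> ?U)"
  proof
    show "?U \<subseteq> (\<Union>v\<in>rs_vertices D \<sigma>. v \<inter> ?U)"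
    proof
      fix x assume x: "x \<in> ?U"
      hence "x \<in> D" using UD by blast
      hence "orb \<sigma> x \<in> rs_vertices D \<sigma>" unfolding rs_vertices_def by blast
      thus "x \<in> (\<Union>v\<in>rs_vertices D \<sigma>. v \<inter> ?U)" using x orb_self[of x \<sigma>] by blast
    qed
  qed blast
  have "card ?U = (\<Sum>v\<in>rs_vertices D \<sigma>. card (v \<inter> ?U))"
    apply (subst UV)
    apply (rule card_UN_disjoint[OF finV])
    using finite_subset[OF UD finD] apply blast
    unfolding rs_vertices_def
    using orbs_disjoint[OF permutation_s] by blast
  also have "\<dots> = card (rs_vertices D \<sigma>)" using one by simp
  finally show ?thesis using cU by (metis dvd_triv_left)
qed

lemma faces_even:
  assumes "even (card (rs_edges D \<alpha>))" "\<exists>M. perfect_matching D \<alpha> \<sigma> M"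
  shows "even (card (rs_faces D \<alpha> \<sigma>))"
proof -
  have eV: "even (card (rs_vertices D \<sigma>))" using assms card_V_even by blast
  have "evenperm (\<sigma> \<circ> \<alpha>) = (evenperm \<sigma> = evenperm \<alpha>)"
    by (rule evenperm_comp[OF permutation_s permutation_a])
  moreover have "evenperm (\<sigma> \<circ> \<alpha>) = even (card D + card (rs_faces D \<alpha> \<sigma>))"
    unfolding rs_faces_def by (rule perm_parity[OF pperm finD])
  moreover have "evenperm \<sigma> = even (card D + card (rs_vertices D \<sigma>))"
    unfolding rs_vertices_def by (rule perm_parity[OF sperm finD])
  moreover have "evenperm \<alpha> = even (card D + card (rs_edges D \<alpha>))"
    unfolding edges_orbs by (rule perm_parity[OF aperm finD])
  ultimately show ?thesis using card_D eV assms(1) by simp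
qed

definition bd :: "'d set set \<Rightarrow> 'd set set" where
  "bd T = {rs_edge \<alpha> d | d. d \<in> D \<and> \<not> (orb (\<sigma> \<circ> \<alpha>) d \<in> T \<longleftrightarrow> orb (\<sigma> \<circ> \<alpha>) (\<alpha> d) \<in> T)}"

lemma edge_eq_cases:
  assumes "d \<in> D" "rs_edge \<alpha> d' = rs_edge \<alpha> d" shows "d' = d \<or> d' = \<alpha> d"
  using assms unfolding rs_edge_def by (metis doubleton_eq_iff)

lemma bd_mem:
  assumes "d \<in> D"
  shows "rs_edge \<alpha> d \<in> bd T \<longleftrightarrow> \<not> (orb (\<sigma> \<circ> \<alpha>) d \<in> T \<longleftrightarrow> orb (\<sigma> \<circ> \<alpha>) (\<alpha> d) \<in> T)"
proof
  assume "rs_edge \<alpha> d \<in> bd T"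
  then obtain d' where d': "d' \<in> D" "rs_edge \<alpha> d = rs_edge \<alpha> d'"
    "\<not> (orb (\<sigma> \<circ> \<alpha>) d' \<in> T \<longleftrightarrow> orb (\<sigma> \<circ> \<alpha>) (\<alpha> d') \<in> T)"
    unfolding bd_def by blast
  from edge_eq_cases[OF assms d'(2)[symmetric]] show "\<not> (orb (\<sigma> \<circ> \<alpha>) d \<in> T \<longleftrightarrow> orb (\<sigma> \<circ> \<alpha>) (\<alpha> d) \<in> T)"
  proof
    assume "d' = d" thus ?thesis using d' by simp
  next
    assume "d' = \<alpha> d" thus ?thesis using d' ainv[OF assms] by auto
  qed
next
  assume "\<not> (orb (\<sigma> \<circ> \<alpha>) d \<in> T \<longleftrightarrow> orb (\<sigma> \<circ> \<alpha>) (\<alpha> d) \<in> T)"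
  thus "rs_edge \<alpha> d \<in> bd T" unfolding bd_def using assms by blast
qed

lemma bd_sub: "bd T \<subseteq> rs_edges D \<alpha>"
  unfolding bd_def rs_edges_def by blast

lemma bd_diff: "bd (sym_diff T1 T2) = sym_diff (bd T1) (bd T2)"
proof -
  have "e \<in> bd (sym_diff T1 T2) \<longleftrightarrow> e \<in> sym_diff (bd T1) (bd T2)" if e: "e \<in> rs_edges D \<alpha>" for e
  proof -
    obtain d where d: "d \<in> D" "e = rs_edge \<alpha> d" using e unfolding rs_edges_def by blast
    show ?thesis unfolding d(2) sym_diff_mem bd_mem[OF d(1)] by blast
  qed
  moreover have "sym_diff (bd T1) (bd T2) \<subseteq> rs_edges D \<alpha>" using bd_sub unfolding sym_diff_def by blast
  ultimately show ?thesis using bd_sub by blast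
qed

lemma bd_empty: "bd {} = {}" unfolding bd_def by blast

lemma face_step: "x \<in> D \<Longrightarrow> orb (\<sigma> \<circ> \<alpha>) ((\<sigma> \<circ> \<alpha>) x) = orb (\<sigma> \<circ> \<alpha>) x"
  using orb_eq[OF permutation_p orb_step] by blast

lemma bd_zero:
  assumes conn: "rs_connected D \<alpha> \<sigma>" and T: "T \<subseteq> rs_faces D \<alpha> \<sigma>" and z: "bd T = {}"
  shows "T = {} \<or> T = rs_faces D \<alpha> \<sigma>"
proof -
  let ?f = "orb (\<sigma> \<circ> \<alpha>)"
  have ea: "?f (\<alpha> x) \<in> T \<longleftrightarrow> ?f x \<in> T" if "x \<in> D" for x
    using bd_mem[OF that, of T] z by blast
  have es: "?f (\<sigma> x) \<in> T \<longleftrightarrow> ?f x \<in> T" if x: "x \<in> D" for x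
  proof -
    have "\<sigma> x = (\<sigma> \<circ> \<alpha>) (\<alpha> x)" using ainv[OF x] by simp
    hence "?f (\<sigma> x) = ?f (\<alpha> x)" using face_step[OF aD[OF x]] by simp
    thus ?thesis using ea[OF x] by simp
  qed
  let ?R = "{(x, \<sigma> x) | x. x \<in> D} \<union> {(x, \<alpha> x) | x. x \<in> D}"
  have reach: "e \<in> D \<and> (?f e \<in> T \<longleftrightarrow> ?f d \<in> T)" if "(d, e) \<in> ?R\<^sup>*" "d \<in> D" for d e
    using that(1)
  proof (induction rule: rtrancl_induct)
    case base then show ?case using that(2) by simp
  next
    case (step y z)
    then show ?case using es ea sD aD by blast
  qed
  show ?thesis
  proof (cases "T = {}")
    case False
    then obtain F where F: "F \<in> T" by blast
    then obtain d0 where d0: "d0 \<in> D" "F = ?f d0" using T unfolding rs_faces_def by blast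
    have "rs_faces D \<alpha> \<sigma> \<subseteq> T"
    proof
      fix G assume "G \<in> rs_faces D \<alpha> \<sigma>"
      then obtain e where e: "e \<in> D" "G = ?f e" unfolding rs_faces_def by blast
      have "(d0, e) \<in> ?R\<^sup>*" using conn d0 e unfolding rs_connected_def by blast
      thus "G \<in> T" using reach[of d0 e] d0 e F by blast
    qed
    thus ?thesis using T by blast
  qed simp
qed

lemma bd_single:
  assumes "facial_cycle D \<alpha> \<sigma> F" shows "bd {F} = face_edges \<alpha> F"
proof -
  let ?f = "orb (\<sigma> \<circ> \<alpha>)"
  obtain d0 where d0: "d0 \<in> D" "F = ?f d0" using assms unfolding facial_cycle_def rs_faces_def by blast
  have inj: "inj_on (rs_edge \<alpha>) F" using assms unfolding facial_cycle_def by blast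
  have FD: "F \<subseteq> D" using orb_subset[OF pperm d0(1)] d0 by simp
  have fF: "?f d = F" if "d \<in> F" for d using orb_eq[OF permutation_p] that d0 by blast
  have eq: "rs_edge \<alpha> (\<alpha> d) = rs_edge \<alpha> d" if "d \<in> D" for d
    unfolding rs_edge_def using ainv[OF that] by auto
  show ?thesis
  proof
    show "bd {F} \<subseteq> face_edges \<alpha> F"
    proof
      fix x assume "x \<in> bd {F}"
      then obtain d where d: "d \<in> D" "x = rs_edge \<alpha> d" "\<not> (?f d = F \<longleftrightarrow> ?f (\<alpha> d) = F)"
        unfolding bd_def by blast
      show "x \<in> face_edges \<alpha> F"
      proof (cases "?f d = F")
        case True
        hence "d \<in> F" using orb_self[of d "\<sigma> \<circ> \<alpha>"] by simp
        thus ?thesis unfolding face_edges_def d(2) by blast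
      next
        case False
        hence "\<alpha> d \<in> F" using d(3) orb_self[of "\<alpha> d" "\<sigma> \<circ> \<alpha>"] by simp
        thus ?thesis unfolding face_edges_def d(2) eq[OF d(1), symmetric] by blast
      qed
    qed
    show "face_edges \<alpha> F \<subseteq> bd {F}"
    proof
      fix x assume "x \<in> face_edges \<alpha> F"
      then obtain d where d: "d \<in> F" "x = rs_edge \<alpha> d" unfolding face_edges_def by blast
      have dD: "d \<in> D" using d FD by blast
      have "?f (\<alpha> d) \<noteq> F"
      proof
        assume "?f (\<alpha> d) = F"
        hence "\<alpha> d \<in> F" using orb_self[of "\<alpha> d" "\<sigma> \<circ> \<alpha>"] by simp
        hence "\<alpha> d = d" using inj d(1) eq[OF dD] unfolding inj_on_def by blast
        thus False using anfix[OF dD] by simp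
      qed
      thus "x \<in> bd {F}" unfolding d(2) bd_mem[OF dD] using fF[OF d(1)] by simp
    qed
  qed
qed

lemma finite_faces: "finite (rs_faces D \<alpha> \<sigma>)"
  unfolding rs_faces_def using finD by simp

lemma bd_parity:
  assumes conn: "rs_connected D \<alpha> \<sigma>" and evF: "even (card (rs_faces D \<alpha> \<sigma>))"
    and T1: "T1 \<subseteq> rs_faces D \<alpha> \<sigma>" and T2: "T2 \<subseteq> rs_faces D \<alpha> \<sigma>" and eq: "bd T1 = bd T2"
  shows "even (card T1) \<longleftrightarrow> even (card T2)"
proof -
  have fin1: "finite T1" and fin2: "finite T2" using T1 T2 finite_faces finite_subset by auto
  have "bd (sym_diff T1 T2) = {}" unfolding bd_diff eq sym_diff_self ..
  moreover have "sym_diff T1 T2 \<subseteq> rs_faces D \<alpha> \<sigma>" using T1 T2 unfolding sym_diff_def by blast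
  ultimately have "sym_diff T1 T2 = {} \<or> sym_diff T1 T2 = rs_faces D \<alpha> \<sigma>" using bd_zero[OF conn] by blast
  hence "even (card (sym_diff T1 T2))" using evF by auto
  thus ?thesis using card_sym_diff_parity[OF fin1 fin2] by blast
qed

definition rel :: "'d set set \<Rightarrow> 'd set set \<Rightarrow> bool" where
  "rel A B \<longleftrightarrow> (\<exists>T. T \<subseteq> rs_faces D \<alpha> \<sigma> \<and> sym_diff A B = bd T)"

lemma rel_refl: "rel A A"
  unfolding rel_def sym_diff_self using bd_empty by blast

lemma rel_sym: "rel A B \<Longrightarrow> rel B A"
  unfolding rel_def using sym_diff_comm by metis

lemma rel_trans: "rel A B \<Longrightarrow> rel B C \<Longrightarrow> rel A C"
proof -
  assume "rel A B" "rel B C"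
  then obtain T1 T2 where "T1 \<subseteq> rs_faces D \<alpha> \<sigma>" "sym_diff A B = bd T1"
    "T2 \<subseteq> rs_faces D \<alpha> \<sigma>" "sym_diff B C = bd T2" unfolding rel_def by blast
  moreover have "sym_diff A C = sym_diff (sym_diff A B) (sym_diff B C)" using sym_diff_trans by metis
  ultimately have "sym_diff A C = bd (sym_diff T1 T2)" "sym_diff T1 T2 \<subseteq> rs_faces D \<alpha> \<sigma>"
    using bd_diff unfolding sym_diff_def by auto
  thus "rel A C" unfolding rel_def by blast
qed

theorem main_bip:
  assumes conn: "rs_connected D \<alpha> \<sigma>" and evF: "even (card (rs_faces D \<alpha> \<sigma>))"
  shows "total_resonance_bipartite D \<alpha> \<sigma>"
proof -
  let ?PM = "{M. perfect_matching D \<alpha> \<sigma> M}"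
  define rep where "rep M = (SOME M'. perfect_matching D \<alpha> \<sigma> M' \<and> rel M' M)" for M
  define X where "X = {M. \<exists>T. T \<subseteq> rs_faces D \<alpha> \<sigma> \<and> sym_diff M (rep M) = bd T \<and> even (card T)}"
  have Xiff: "M \<in> X \<longleftrightarrow> even (card T)"
    if "T \<subseteq> rs_faces D \<alpha> \<sigma>" "sym_diff M (rep M) = bd T" for M T
    using bd_parity[OF conn evF] that unfolding X_def by blast
  have rep_rel: "rel (rep M) M" if "perfect_matching D \<alpha> \<sigma> M" for M
  proof -
    have "\<exists>M'. perfect_matching D \<alpha> \<sigma> M' \<and> rel M' M" using that rel_refl by blast
    from someI_ex[OF this] show ?thesis unfolding rep_def by blast
  qed
  have rep_eq: "rep u = rep w" if "rel u w" for u w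
  proof -
    have "{M'. perfect_matching D \<alpha> \<sigma> M' \<and> rel M' u} = {M'. perfect_matching D \<alpha> \<sigma> M' \<and> rel M' w}"
      using that rel_sym rel_trans by blast
    thus ?thesis unfolding rep_def by (metis (no_types, lifting) Collect_cong mem_Collect_eq)
  qed
  have "\<forall>u\<in>?PM. \<forall>w\<in>?PM. total_res_adj D \<alpha> \<sigma> u w \<longrightarrow> (u \<in> X \<longleftrightarrow> w \<notin> X)"
  proof (intro ballI impI)
    fix u w assume u: "u \<in> ?PM" and w: "w \<in> ?PM" and adj: "total_res_adj D \<alpha> \<sigma> u w"
    then obtain F where F: "facial_cycle D \<alpha> \<sigma> F" "sym_diff u w = face_edges \<alpha> F"
      unfolding total_res_adj_def by blast
    have Ff: "{F} \<subseteq> rs_faces D \<alpha> \<sigma>" using F unfolding facial_cycle_def by blast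
    have uw: "sym_diff u w = bd {F}" using F bd_single by simp
    hence "rel u w" unfolding rel_def using Ff by blast
    hence req: "rep w = rep u" using rep_eq by simp
    obtain T1 where T1: "T1 \<subseteq> rs_faces D \<alpha> \<sigma>" "sym_diff (rep u) u = bd T1"
      using rep_rel u unfolding rel_def by blast
    have T1': "sym_diff u (rep u) = bd T1" using T1 sym_diff_comm by metis
    have "sym_diff w (rep w) = sym_diff (sym_diff w u) (sym_diff u (rep u))"
      unfolding req using sym_diff_trans by metis
    also have "\<dots> = bd (sym_diff {F} T1)" unfolding T1' bd_diff sym_diff_comm[of w u] uw ..
    finally have T2: "sym_diff w (rep w) = bd (sym_diff {F} T1)" .
    have T2s: "sym_diff {F} T1 \<subseteq> rs_faces D \<alpha> \<sigma>" using Ff T1 unfolding sym_diff_def by blast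
    have fin1: "finite T1" using T1 finite_faces finite_subset by auto
    have "u \<in> X \<longleftrightarrow> even (card T1)" using Xiff T1(1) T1' by blast
    moreover have "w \<in> X \<longleftrightarrow> even (card (sym_diff {F} T1))" using Xiff T2s T2 by blast
    moreover have "even (card (sym_diff {F} T1)) \<longleftrightarrow> \<not> even (card T1)"
      using card_sym_diff_parity[of "{F}" T1] fin1 by simp
    ultimately show "u \<in> X \<longleftrightarrow> w \<notin> X" by blast
  qed
  thus ?thesis unfolding total_resonance_bipartite_def bipartite_def by blast
qed

end

theorem theorem2p6:
  fixes D :: "'d set" and \<alpha> \<sigma> :: "'d \<Rightarrow> 'd" and h :: nat
  assumes "rotation_system D \<alpha> \<sigma>"
    and "rs_connected D \<alpha> \<sigma>"
    and "rs_genus D \<alpha> \<sigma> = int h"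
    and "even (card (rs_edges D \<alpha>))"
    and "\<exists>M. perfect_matching D \<alpha> \<sigma> M"
  shows "total_resonance_bipartite D \<alpha> \<sigma>"
proof -
  interpret rsys D \<alpha> \<sigma> using assms(1) by unfold_locales
  show ?thesis using main_bip[OF assms(2) faces_even[OF assms(4,5)]] .
qed

end
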